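(* Let $S_1,\ldots,S_m$ be formulas ($m\ge1$). The doxastic states $\emptyset[S_1,S_2,\ldots,S_m]$ and $\emptyset[S_2,\ldots,S_m]$ coincide if and only if $S_1$ is equivalent to the disjunction of some (possibly none) Q-combinations of $S_2,\ldots,S_m$.
   Context: Propositional models are truth assignments over a finite set of variables; a formula used where a set of models is expected stands for its set of models. A doxastic state is a sequence $[C(0),\ldots,C(k)]$ of nonempty, pairwise disjoint sets of models covering all models; two doxastic states coincide when they are equal. The flat doxastic state $\emptyset$ is $[\text{all models}]$. Lexicographic revision: $C\,\mathrm{lex}(A) = [C(0)\cap A,\ldots,C(k)\cap A, C(0)\setminus A,\ldots,C(k)\setminus A]$, empty sets discarded. $\emptyset[S_1,\ldots,S_m]$ denotes $\emptyset$ revised lexicographically by $S_1$, then $S_2$, ..., then $S_m$. A Q-combination of formulas $T_1,\ldots,T_n$ is a formula $(B_1\equiv T_1)\wedge\cdots\wedge(B_n\equiv T_n)$ with each $B_i\in\{\mathsf{true},\mathsf{false}\}$. The empty disjunction is $\mathsf{false}$. *)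

theory Defs
  imports Main
begin

datatype 'v fm = Var 'v | TT | FF | Neg "'v fm" | And "'v fm" "'v fm"
  | Or "'v fm" "'v fm" | Iff "'v fm" "'v fm"

type_synonym 'v model = "'v \<Rightarrow> bool"

fun eval :: "'v model \<Rightarrow> 'v fm \<Rightarrow> bool" where
  "eval a (Var x) = a x"
| "eval a TT = True"
| "eval a FF = False"
| "eval a (Neg f) = (\<not> eval a f)"
| "eval a (And f g) = (eval a f \<and> eval a g)"
| "eval a (Or f g) = (eval a f \<or> eval a g)"
| "eval a (Iff f g) = (eval a f \<longleftrightarrow> eval a g)"

definition models :: "'v fm \<Rightarrow> 'v model set" where
  "models f = {a. eval a f}"

type_synonym 'v doxstate = "'v model set list"

definition lex :: "'v doxstate \<Rightarrow> 'v model set \<Rightarrow> 'v doxstate" where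
  "lex C A = filter (\<lambda>X. X \<noteq> {}) (map (\<lambda>X. X \<inter> A) C @ map (\<lambda>X. X - A) C)"

definition flat :: "'v doxstate" where
  "flat = [UNIV]"

definition revise_seq :: "'v fm list \<Rightarrow> 'v doxstate" where
  "revise_seq Ss = foldl (\<lambda>C S. lex C (models S)) flat Ss"

definition qcomb :: "bool list \<Rightarrow> 'v fm list \<Rightarrow> 'v fm" where
  "qcomb Bs Ts = foldr And (map (\<lambda>(b, T). Iff (if b then TT else FF) T) (zip Bs Ts)) TT"

definition is_qcomb :: "'v fm \<Rightarrow> 'v fm list \<Rightarrow> bool" where
  "is_qcomb q Ts \<longleftrightarrow> (\<exists>Bs. length Bs = length Ts \<and> q = qcomb Bs Ts)"

definition disj :: "'v fm list \<Rightarrow> 'v fm" where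
  "disj fs = foldr Or fs FF"

end

theory Submission
  imports Defs
begin

definition rawf :: "'v doxstate \<Rightarrow> 'v fm \<Rightarrow> 'v doxstate" where
  "rawf L S = map (\<lambda>X. X \<inter> models S) L @ map (\<lambda>X. X - models S) L"

definition blocks :: "'v fm list \<Rightarrow> 'v doxstate" where
  "blocks Ss = foldl rawf [UNIV] Ss"

lemma lex_filter: "lex (filter (\<lambda>X. X \<noteq> {}) L) A
   = filter (\<lambda>X. X \<noteq> {}) (map (\<lambda>X. X \<inter> A) L @ map (\<lambda>X. X - A) L)"
proof -
  have a: "filter (\<lambda>X. X \<noteq> {}) (map (\<lambda>X. X \<inter> A) (filter (\<lambda>X. X \<noteq> {}) L)) = filter (\<lambda>X. X \<noteq> {}) (map (\<lambda>X. X \<inter> A) L)"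
    by (induction L) auto
  have b: "filter (\<lambda>X. X \<noteq> {}) (map (\<lambda>X. X - A) (filter (\<lambda>X. X \<noteq> {}) L)) = filter (\<lambda>X. X \<noteq> {}) (map (\<lambda>X. X - A) L)"
    by (induction L) auto
  show ?thesis unfolding lex_def using a b by simp
qed

lemma fold_filter: "foldl (\<lambda>C S. lex C (models S)) (filter (\<lambda>X. X \<noteq> {}) L) Ss
   = filter (\<lambda>X. X \<noteq> {}) (foldl rawf L Ss)"
proof (induction Ss arbitrary: L)
  case Nil then show ?case by simp
next
  case (Cons S Ss)
  show ?case using Cons[of "rawf L S"] by (simp add: lex_filter rawf_def)
qed

lemma revise_blocks: "revise_seq Ss = filter (\<lambda>X. X \<noteq> {}) (foldl rawf [UNIV] Ss)"
  unfolding revise_seq_def flat_def using fold_filter[of "[UNIV]" Ss] by simp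

lemma concat_aux: "concat (map (\<lambda>B. map (\<lambda>X. X \<inter> B) (rawf L S)) Bl)
  = concat (map (\<lambda>B'. map (\<lambda>X. X \<inter> B') L)
       (concat (map (\<lambda>B. map (\<lambda>X. X \<inter> B) (rawf [UNIV] S)) Bl)))"
  by (induction Bl) (auto simp: rawf_def Int_assoc Diff_eq Int_ac)

lemma fold_raw: "foldl rawf L Ss = concat (map (\<lambda>B. map (\<lambda>X. X \<inter> B) L) (blocks Ss))"
proof (induction Ss arbitrary: L)
  case Nil then show ?case by (simp add: blocks_def)
next
  case (Cons S Ss)
  have "foldl rawf L (S # Ss) = foldl rawf (rawf L S) Ss" by simp
  also have "\<dots> = concat (map (\<lambda>B. map (\<lambda>X. X \<inter> B) (rawf L S)) (blocks Ss))"
    using Cons by simp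
  also have "\<dots> = concat (map (\<lambda>B'. map (\<lambda>X. X \<inter> B') L)
       (concat (map (\<lambda>B. map (\<lambda>X. X \<inter> B) (rawf [UNIV] S)) (blocks Ss))))"
    by (rule concat_aux)
  also have "concat (map (\<lambda>B. map (\<lambda>X. X \<inter> B) (rawf [UNIV] S)) (blocks Ss)) = blocks (S # Ss)"
    using Cons[of "rawf [UNIV] S"] by (simp add: blocks_def)
  finally show ?case .
qed

lemma blocks_Cons: "blocks (S # Ss) = concat (map (\<lambda>B. [models S \<inter> B, (UNIV - models S) \<inter> B]) (blocks Ss))"
  using fold_raw[of "rawf [UNIV] S" Ss] by (simp add: blocks_def rawf_def)

lemma blocks_form: "B \<in> set (blocks Ss) \<Longrightarrow> \<exists>Bs. B = {w. map (\<lambda>S. eval w S) Ss = Bs}"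
proof (induction Ss arbitrary: B)
  case Nil then show ?case by (simp add: blocks_def)
next
  case (Cons S Ss)
  then obtain B0 where B0: "B0 \<in> set (blocks Ss)" and
    "B = models S \<inter> B0 \<or> B = (UNIV - models S) \<inter> B0" by (auto simp: blocks_Cons)
  moreover obtain Bs where "B0 = {w. map (\<lambda>S. eval w S) Ss = Bs}" using Cons.IH[OF B0] by blast
  ultimately show ?case
    apply (elim disjE)
     apply (rule exI[of _ "True # Bs"]) apply (auto simp: models_def)[1]
    apply (rule exI[of _ "False # Bs"]) apply (auto simp: models_def)[1]
    done
qed

lemma blocks_cover: "\<exists>B\<in>set (blocks Ss). w \<in> B"
proof (induction Ss)
  case Nil then show ?case by (simp add: blocks_def)
next
  case (Cons S Ss)
  then obtain B where "B \<in> set (blocks Ss)" "w \<in> B" by blast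
  then show ?case by (cases "w \<in> models S") (auto simp: blocks_Cons)
qed

abbreviation ne :: "'a set \<Rightarrow> bool" where "ne X \<equiv> X \<noteq> {}"

lemma split_le: "length (filter ne Bl) \<le> length (filter ne (concat (map (\<lambda>B. [A \<inter> B, (UNIV - A) \<inter> B]) Bl)))"
  by (induction Bl) auto

lemma split_lt: "\<exists>B\<in>set Bl. \<not> (B \<subseteq> A \<or> A \<inter> B = {}) \<Longrightarrow>
  length (filter ne Bl) < length (filter ne (concat (map (\<lambda>B. [A \<inter> B, (UNIV - A) \<inter> B]) Bl)))"
proof (induction Bl)
  case Nil then show ?case by simp
next
  case (Cons B Bl)
  show ?case
  proof (cases "B \<subseteq> A \<or> A \<inter> B = {}")
    case True
    then have "\<exists>B\<in>set Bl. \<not> (B \<subseteq> A \<or> A \<inter> B = {})" using Cons.prems by auto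
    with Cons.IH True show ?thesis by auto
  next
    case False
    then have "A \<inter> B \<noteq> {}" "(UNIV - A) \<inter> B \<noteq> {}" "B \<noteq> {}" by auto
    with split_le[of Bl A] show ?thesis by simp
  qed
qed

lemma split_eq: "filter ne (concat (map (\<lambda>B. [A \<inter> B, (UNIV - A) \<inter> B]) Bl)) = filter ne Bl
   \<longleftrightarrow> (\<forall>B\<in>set Bl. B \<subseteq> A \<or> A \<inter> B = {})"
proof
  assume "filter ne (concat (map (\<lambda>B. [A \<inter> B, (UNIV - A) \<inter> B]) Bl)) = filter ne Bl"
  then show "\<forall>B\<in>set Bl. B \<subseteq> A \<or> A \<inter> B = {}" using split_lt[of Bl A] by force
next
  assume "\<forall>B\<in>set Bl. B \<subseteq> A \<or> A \<inter> B = {}"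
  then show "filter ne (concat (map (\<lambda>B. [A \<inter> B, (UNIV - A) \<inter> B]) Bl)) = filter ne Bl"
  proof (induction Bl)
    case Nil then show ?case by simp
  next
    case (Cons B Bl)
    then have "B \<subseteq> A \<or> A \<inter> B = {}" by simp
    then have "filter ne [A \<inter> B, (UNIV - A) \<inter> B] = filter ne [B]"
      by (auto simp: Int_absorb1 Diff_Int_distrib2)
    with Cons show ?case by auto
  qed
qed

lemma qcomb_models: "length Bs = length Ss \<Longrightarrow> models (qcomb Bs Ss) = {w. map (\<lambda>S. eval w S) Ss = Bs}"
proof (induction Ss arbitrary: Bs)
  case Nil then show ?case by (simp add: qcomb_def models_def)
next
  case (Cons S Ss)
  then obtain b Bs' where Bs: "Bs = b # Bs'" "length Bs' = length Ss" by (cases Bs) auto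
  from Cons.IH[OF Bs(2)] show ?case
    by (auto simp: Bs qcomb_def models_def)
qed

lemma disj_models: "models (disj Q) = (\<Union>q\<in>set Q. models q)"
  by (induction Q) (auto simp: disj_def models_def)

theorem mainTheorem7:
  fixes S1 :: "('v::finite) fm" and Ss :: "'v fm list"
  shows "revise_seq (S1 # Ss) = revise_seq Ss \<longleftrightarrow>
    (\<exists>Q. (\<forall>q\<in>set Q. is_qcomb q Ss) \<and> models S1 = models (disj Q))"
proof -
  let ?M = "models S1"
  have "revise_seq (S1 # Ss) = filter ne (concat (map (\<lambda>B. [?M \<inter> B, (UNIV - ?M) \<inter> B]) (blocks Ss)))"
    unfolding revise_blocks using fold_raw[of "rawf [UNIV] S1" Ss]
    by (simp add: rawf_def)
  moreover have "revise_seq Ss = filter ne (blocks Ss)"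
    unfolding revise_blocks blocks_def by simp
  ultimately have "revise_seq (S1 # Ss) = revise_seq Ss \<longleftrightarrow> (\<forall>B\<in>set (blocks Ss). B \<subseteq> ?M \<or> ?M \<inter> B = {})"
    using split_eq by simp
  also have "\<dots> \<longleftrightarrow> (\<forall>w w'. map (\<lambda>S. eval w S) Ss = map (\<lambda>S. eval w' S) Ss \<longrightarrow> (w \<in> ?M \<longleftrightarrow> w' \<in> ?M))"
  proof
    assume H: "\<forall>B\<in>set (blocks Ss). B \<subseteq> ?M \<or> ?M \<inter> B = {}"
    show "\<forall>w w'. map (\<lambda>S. eval w S) Ss = map (\<lambda>S. eval w' S) Ss \<longrightarrow> (w \<in> ?M \<longleftrightarrow> w' \<in> ?M)"
    proof (intro allI impI)
      fix w w' assume eq: "map (\<lambda>S. eval w S) Ss = map (\<lambda>S. eval w' S) Ss"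
      obtain B where B: "B \<in> set (blocks Ss)" "w \<in> B" using blocks_cover by blast
      obtain Bs where "B = {w. map (\<lambda>S. eval w S) Ss = Bs}" using blocks_form[OF B(1)] by blast
      with B eq have "w' \<in> B" by auto
      with B H show "w \<in> ?M \<longleftrightarrow> w' \<in> ?M" by blast
    qed
  next
    assume H: "\<forall>w w'. map (\<lambda>S. eval w S) Ss = map (\<lambda>S. eval w' S) Ss \<longrightarrow> (w \<in> ?M \<longleftrightarrow> w' \<in> ?M)"
    show "\<forall>B\<in>set (blocks Ss). B \<subseteq> ?M \<or> ?M \<inter> B = {}"
    proof
      fix B assume "B \<in> set (blocks Ss)"
      then obtain Bs where "B = {w. map (\<lambda>S. eval w S) Ss = Bs}" using blocks_form by blast
      then show "B \<subseteq> ?M \<or> ?M \<inter> B = {}" using H by blast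
    qed
  qed
  also have "\<dots> \<longleftrightarrow> (\<exists>Q. (\<forall>q\<in>set Q. is_qcomb q Ss) \<and> ?M = models (disj Q))"
  proof
    assume H: "\<forall>w w'. map (\<lambda>S. eval w S) Ss = map (\<lambda>S. eval w' S) Ss \<longrightarrow> (w \<in> ?M \<longleftrightarrow> w' \<in> ?M)"
    define Q where "Q = map (\<lambda>Bs. qcomb Bs Ss)
       (filter (\<lambda>Bs. models (qcomb Bs Ss) \<subseteq> ?M) (List.n_lists (length Ss) [True, False]))"
    have "\<forall>q\<in>set Q. is_qcomb q Ss"
      unfolding Q_def is_qcomb_def by (auto simp: set_n_lists)
    moreover have "?M = models (disj Q)"
    proof
      show "models (disj Q) \<subseteq> ?M" unfolding disj_models Q_def by auto
    next
      show "?M \<subseteq> models (disj Q)"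
      proof
        fix w assume w: "w \<in> ?M"
        let ?Bs = "map (\<lambda>S. eval w S) Ss"
        have len: "length ?Bs = length Ss" by simp
        have "models (qcomb ?Bs Ss) \<subseteq> ?M"
          unfolding qcomb_models[OF len] using H w by blast
        moreover have "?Bs \<in> set (List.n_lists (length Ss) [True, False])"
          by (auto simp: set_n_lists)
        moreover have "w \<in> models (qcomb ?Bs Ss)" unfolding qcomb_models[OF len] by simp
        ultimately show "w \<in> models (disj Q)" unfolding disj_models Q_def by auto
      qed
    qed
    ultimately show "\<exists>Q. (\<forall>q\<in>set Q. is_qcomb q Ss) \<and> ?M = models (disj Q)" by blast
  next
    assume "\<exists>Q. (\<forall>q\<in>set Q. is_qcomb q Ss) \<and> ?M = models (disj Q)"
    then obtain Q where Q: "\<forall>q\<in>set Q. is_qcomb q Ss" "?M = models (disj Q)" by blast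
    show "\<forall>w w'. map (\<lambda>S. eval w S) Ss = map (\<lambda>S. eval w' S) Ss \<longrightarrow> (w \<in> ?M \<longleftrightarrow> w' \<in> ?M)"
    proof (intro allI impI)
      fix w w' assume eq: "map (\<lambda>S. eval w S) Ss = map (\<lambda>S. eval w' S) Ss"
      have key: "\<forall>q\<in>set Q. w \<in> models q \<longleftrightarrow> w' \<in> models q"
      proof
        fix q assume "q \<in> set Q"
        then obtain Bs where l: "length Bs = length Ss" and qq: "q = qcomb Bs Ss" using Q(1) is_qcomb_def by blast
        have "models q = {w. map (\<lambda>S. eval w S) Ss = Bs}" using qcomb_models[OF l] qq by simp
        then show "w \<in> models q \<longleftrightarrow> w' \<in> models q" by (simp only: mem_Collect_eq eq)
      qed
      show "w \<in> ?M \<longleftrightarrow> w' \<in> ?M" unfolding Q(2) disj_models using key by blast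
    qed
  qed
  finally show ?thesis .
qed

end
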